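(* Let $G$ be a word hyperbolic group and $0\to\mathbb Z\xrightarrow{\iota}E\xrightarrow{\pi}G\to1$ a central extension, $X$ a finite set mapping onto a symmetric generating set of $E$ (evaluation $w\mapsto\overline w\in E$). Let $C>0$ be an integer such that for every $g\in G$ the maximum $\max\{\overline w\,\iota(-C\,\mathrm{len}(w)): w\in X^*,\ \pi(\overline w)=g\}$ exists in the ordered fibre $\pi^{-1}(g)$, and define $\rho:G\to E$ by letting $\rho(g)$ be this maximum. Then for all $g\in G$ and $x\in X$: (1) $|\rho(g)\overline x-\rho(g\pi(\overline x))|\le C$; (2) $|\overline x\rho(g)-\rho(\pi(\overline x)g)|\le C$.
   Context: The order on a fibre $\pi^{-1}(g)$: $h_1\le h_2$ iff $h_2h_1^{-1}=\iota(n)$ with $n\ge0$. For $h_1,h_2$ in the same fibre, $h_1-h_2$ denotes the integer $n$ with $\iota(n)=h_1h_2^{-1}$. *)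

theory Defs
  imports "HOL-Algebra.Algebra"
begin

definition word_length :: "('g, 'b) monoid_scheme \<Rightarrow> 'g set \<Rightarrow> 'g \<Rightarrow> nat" where
  "word_length G S g = (LEAST n. \<exists>ws. length ws = n \<and> set ws \<subseteq> S \<union> m_inv G ` S
      \<and> foldr (\<otimes>\<^bsub>G\<^esub>) ws \<one>\<^bsub>G\<^esub> = g)"

definition word_dist :: "('g, 'b) monoid_scheme \<Rightarrow> 'g set \<Rightarrow> 'g \<Rightarrow> 'g \<Rightarrow> real" where
  "word_dist G S a b = real (word_length G S (inv\<^bsub>G\<^esub> a \<otimes>\<^bsub>G\<^esub> b))"

definition gromov_product :: "('g, 'b) monoid_scheme \<Rightarrow> 'g set \<Rightarrow> 'g \<Rightarrow> 'g \<Rightarrow> 'g \<Rightarrow> real" where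
  "gromov_product G S w x y = (word_dist G S x w + word_dist G S y w - word_dist G S x y) / 2"

definition hyperbolic_group :: "('g, 'b) monoid_scheme \<Rightarrow> bool" where
  "hyperbolic_group G \<longleftrightarrow> group G \<and>
     (\<exists>S (\<delta>::real). finite S \<and> S \<subseteq> carrier G \<and> generate G S = carrier G \<and>
        (\<forall>x\<in>carrier G. \<forall>y\<in>carrier G. \<forall>z\<in>carrier G. \<forall>w\<in>carrier G.
           gromov_product G S w x z \<ge> min (gromov_product G S w x y) (gromov_product G S w y z) - \<delta>))"

definition central_extension ::
  "('g, 'b) monoid_scheme \<Rightarrow> ('e, 'c) monoid_scheme \<Rightarrow> (int \<Rightarrow> 'e) \<Rightarrow> ('e \<Rightarrow> 'g) \<Rightarrow> bool" where
  "central_extension G E \<iota> \<pi> \<longleftrightarrow> group G \<and> group E \<and>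
     \<iota> \<in> hom integer_group E \<and> inj \<iota> \<and>
     \<pi> \<in> hom E G \<and> \<pi> ` carrier E = carrier G \<and>
     kernel E G \<pi> = range \<iota> \<and>
     (\<forall>n. \<forall>e\<in>carrier E. \<iota> n \<otimes>\<^bsub>E\<^esub> e = e \<otimes>\<^bsub>E\<^esub> \<iota> n)"

definition fib_le :: "('e, 'c) monoid_scheme \<Rightarrow> (int \<Rightarrow> 'e) \<Rightarrow> 'e \<Rightarrow> 'e \<Rightarrow> bool" where
  "fib_le E \<iota> h1 h2 \<longleftrightarrow> (\<exists>n\<ge>0. h2 \<otimes>\<^bsub>E\<^esub> inv\<^bsub>E\<^esub> h1 = \<iota> n)"

definition fib_diff :: "('e, 'c) monoid_scheme \<Rightarrow> (int \<Rightarrow> 'e) \<Rightarrow> 'e \<Rightarrow> 'e \<Rightarrow> int" where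
  "fib_diff E \<iota> h1 h2 = (THE n. \<iota> n = h1 \<otimes>\<^bsub>E\<^esub> inv\<^bsub>E\<^esub> h2)"

definition eval_word :: "('e, 'c) monoid_scheme \<Rightarrow> ('x \<Rightarrow> 'e) \<Rightarrow> 'x list \<Rightarrow> 'e" where
  "eval_word E ev w = foldr (\<lambda>x a. ev x \<otimes>\<^bsub>E\<^esub> a) w \<one>\<^bsub>E\<^esub>"

end

theory Submission
  imports Defs
begin

locale cext = group E for E (structure) +
  fixes iota :: "int \<Rightarrow> 'a"
  assumes io_hom: "iota \<in> hom integer_group E"
    and io_inj: "inj iota"
    and io_cen: "\<And>n e. e \<in> carrier E \<Longrightarrow> iota n \<otimes> e = e \<otimes> iota n"
begin

lemma io_carr[simp]: "iota n \<in> carrier E"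
  using io_hom by (auto simp: hom_def)

lemma io_add: "iota (m + n) = iota m \<otimes> iota n"
  using io_hom hom_mult[OF io_hom, of m n] by simp

lemma io_zero: "iota 0 = \<one>"
proof -
  have "iota 0 \<otimes> iota 0 = iota 0 \<otimes> \<one>" using io_add[of 0 0] by simp
  then show ?thesis by (metis io_carr l_cancel one_closed)
qed

lemma io_inv: "inv (iota n) = iota (- n)"
proof -
  have "iota n \<otimes> iota (-n) = \<one>" using io_add[of n "-n"] io_zero by simp
  then show ?thesis using inv_equality[of "iota (-n)" "iota n"] io_cen[of "iota n" "-n"]
    by simp
qed

lemma the_io: "iota n = z \<Longrightarrow> (THE m. iota m = z) = n"
  using io_inj by (auto dest: injD)

lemma core: assumes b: "b \<in> carrier E" and z: "z \<in> carrier E"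
  and h: "b \<otimes> inv (z \<otimes> iota k) = iota n"
  shows "z \<otimes> inv b = iota (- k - n)"
proof -
  have "b \<otimes> inv (z \<otimes> iota k) = b \<otimes> (iota (-k) \<otimes> inv z)"
    using b z by (simp add: inv_mult_group io_inv)
  also have "\<dots> = iota (-k) \<otimes> (b \<otimes> inv z)"
    using b z m_assoc[of b "iota (-k)" "inv z", symmetric] io_cen[of b "-k"]
      m_assoc[of "iota (-k)" b "inv z"] by simp
  finally have "iota (-k) \<otimes> (b \<otimes> inv z) = iota n" using h by simp
  then have "iota k \<otimes> (iota (-k) \<otimes> (b \<otimes> inv z)) = iota k \<otimes> iota n" by simp
  also have "\<dots> = iota (k + n)" by (simp add: io_add)
  also have "iota k \<otimes> (iota (-k) \<otimes> (b \<otimes> inv z)) = b \<otimes> inv z"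
    using b z by (simp add: m_assoc[symmetric] io_add[symmetric] io_zero)
  finally have "inv (b \<otimes> inv z) = inv (iota (k+n))" by simp
  then show ?thesis using b z by (simp add: inv_mult_group io_inv)
qed

lemma part1:
  assumes a: "a \<in> carrier E" and b: "b \<in> carrier E" and e: "e \<in> carrier E"
    and h1: "b \<otimes> inv (a \<otimes> e \<otimes> iota (-C)) = iota n1" and n1: "n1 \<ge> 0"
    and h2: "a \<otimes> inv (b \<otimes> inv e \<otimes> iota (-C)) = iota n2" and n2: "n2 \<ge> 0"
  shows "\<bar>THE m. iota m = a \<otimes> e \<otimes> inv b\<bar> \<le> C"
proof -
  have q1: "a \<otimes> e \<otimes> inv b = iota (C - n1)" using core[OF b _ h1] a e by simp
  have "b \<otimes> inv e \<otimes> inv a = iota (C - n2)" using core[OF a _ h2] b e by simp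
  then have "inv (b \<otimes> inv e \<otimes> inv a) = iota (n2 - C)" by (simp add: io_inv)
  then have q2: "a \<otimes> e \<otimes> inv b = iota (n2 - C)" using a b e
    by (simp add: inv_mult_group m_assoc)
  have "C - n1 = n2 - C" using q1 q2 io_inj by (auto dest: injD)
  then show ?thesis using q1 the_io n1 n2 by simp
qed

lemma part2:
  assumes a: "a \<in> carrier E" and b: "b \<in> carrier E" and e: "e \<in> carrier E"
    and h1: "b \<otimes> inv (e \<otimes> a \<otimes> iota (-C)) = iota n1" and n1: "n1 \<ge> 0"
    and h2: "a \<otimes> inv (inv e \<otimes> b \<otimes> iota (-C)) = iota n2" and n2: "n2 \<ge> 0"
  shows "\<bar>THE m. iota m = e \<otimes> a \<otimes> inv b\<bar> \<le> C"
proof -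
  have q1: "e \<otimes> a \<otimes> inv b = iota (C - n1)" using core[OF b _ h1] a e by simp
  have "inv e \<otimes> b \<otimes> inv a = iota (C - n2)" using core[OF a _ h2] b e by simp
  then have "inv (inv e \<otimes> b \<otimes> inv a) = iota (n2 - C)" by (simp add: io_inv)
  then have q: "a \<otimes> inv b \<otimes> e = iota (n2 - C)" using a b e
    by (simp add: inv_mult_group m_assoc)
  have "e \<otimes> a \<otimes> inv b = e \<otimes> (a \<otimes> inv b \<otimes> e) \<otimes> inv e" using a b e
    by (simp add: m_assoc)
  also have "\<dots> = e \<otimes> iota (n2 - C) \<otimes> inv e" by (simp only: q)
  also have "\<dots> = iota (n2 - C) \<otimes> e \<otimes> inv e" using io_cen[OF e, of "n2 - C"] by simp
  finally have q2: "e \<otimes> a \<otimes> inv b = iota (n2 - C)" using e by (simp add: m_assoc)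
  have "C - n1 = n2 - C" using q1 q2 io_inj by (auto dest: injD)
  then show ?thesis using q1 the_io n1 n2 by simp
qed

lemma shuffle: "p \<in> carrier E \<Longrightarrow> q \<in> carrier E \<Longrightarrow>
   p \<otimes> q \<otimes> iota (m + k) = p \<otimes> iota m \<otimes> q \<otimes> iota k"
proof -
  assume p: "p \<in> carrier E" and q: "q \<in> carrier E"
  have c: "q \<otimes> iota m = iota m \<otimes> q" using io_cen[OF q, of m] by simp
  have "q \<otimes> (iota m \<otimes> iota k) = iota m \<otimes> (q \<otimes> iota k)"
    using q by (simp add: m_assoc[symmetric] c)
  then show ?thesis using p q by (simp add: io_add m_assoc)
qed

lemma shuffle2: "p \<in> carrier E \<Longrightarrow> q \<in> carrier E \<Longrightarrow>
   q \<otimes> p \<otimes> iota (m + k) = q \<otimes> (p \<otimes> iota m) \<otimes> iota k"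
  by (simp add: io_add m_assoc)

end

lemma foldr_ev: assumes "group E" "ev ` XX \<subseteq> carrier E" "set w \<subseteq> XX" "c \<in> carrier E"
  shows "foldr (\<lambda>x a. ev x \<otimes>\<^bsub>E\<^esub> a) w c = eval_word E ev w \<otimes>\<^bsub>E\<^esub> c
     \<and> eval_word E ev w \<in> carrier E"
  using assms(3,4)
proof (induction w)
  case Nil
  then show ?case using group.is_monoid[OF assms(1)] by (simp add: eval_word_def monoid.l_one)
next
  case (Cons y w)
  interpret group E by fact
  have y: "ev y \<in> carrier E" using Cons.prems assms(2) by auto
  have ih: "foldr (\<lambda>x a. ev x \<otimes>\<^bsub>E\<^esub> a) w c = eval_word E ev w \<otimes>\<^bsub>E\<^esub> c"
    "eval_word E ev w \<in> carrier E" using Cons by auto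
  show ?case using ih y Cons.prems by (simp add: eval_word_def m_assoc)
qed

lemma eval_carr: "group E \<Longrightarrow> ev ` XX \<subseteq> carrier E \<Longrightarrow> set w \<subseteq> XX \<Longrightarrow> eval_word E ev w \<in> carrier E"
  using foldr_ev[of E ev XX w "\<one>\<^bsub>E\<^esub>"] group.is_monoid monoid.one_closed by blast

lemma eval_snoc: "group E \<Longrightarrow> ev ` XX \<subseteq> carrier E \<Longrightarrow> set w \<subseteq> XX \<Longrightarrow> y \<in> XX \<Longrightarrow>
   eval_word E ev (w @ [y]) = eval_word E ev w \<otimes>\<^bsub>E\<^esub> ev y"
proof -
  assume a: "group E" "ev ` XX \<subseteq> carrier E" "set w \<subseteq> XX" "y \<in> XX"
  interpret group E by fact
  have "ev y \<in> carrier E" using a by auto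
  then have "eval_word E ev (w @ [y]) = foldr (\<lambda>x a. ev x \<otimes>\<^bsub>E\<^esub> a) w (ev y)"
    by (simp add: eval_word_def)
  then show ?thesis using foldr_ev[OF a(1,2,3) \<open>ev y \<in> carrier E\<close>] by simp
qed

lemma eval_cons: "eval_word E ev (y # w) = ev y \<otimes>\<^bsub>E\<^esub> eval_word E ev w"
  by (simp add: eval_word_def)

theorem lemma2p3:
  fixes G :: "('g, 'b) monoid_scheme" and E :: "('e, 'c) monoid_scheme"
    and iota :: "int \<Rightarrow> 'e" and pr :: "'e \<Rightarrow> 'g"
    and Xgen :: "'x set" and ev :: "'x \<Rightarrow> 'e"
    and C :: int and rho :: "'g \<Rightarrow> 'e"
  assumes hyp: "hyperbolic_group G"
    and ext: "central_extension G E iota pr"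
    and finX: "finite Xgen"
    and evX: "ev ` Xgen \<subseteq> carrier E"
    and symX: "\<forall>a\<in>ev ` Xgen. inv\<^bsub>E\<^esub> a \<in> ev ` Xgen"
    and genX: "generate E (ev ` Xgen) = carrier E"
    and Cpos: "C > 0"
    and rho_max: "\<forall>g\<in>carrier G.
       rho g \<in> {eval_word E ev w \<otimes>\<^bsub>E\<^esub> iota (- C * int (length w)) | w. set w \<subseteq> Xgen \<and> pr (eval_word E ev w) = g}
       \<and> (\<forall>h\<in>{eval_word E ev w \<otimes>\<^bsub>E\<^esub> iota (- C * int (length w)) | w. set w \<subseteq> Xgen \<and> pr (eval_word E ev w) = g}.
            fib_le E iota h (rho g))"
    and g: "g \<in> carrier G" and x: "x \<in> Xgen"
  shows "\<bar>fib_diff E iota (rho g \<otimes>\<^bsub>E\<^esub> ev x) (rho (g \<otimes>\<^bsub>G\<^esub> pr (ev x)))\<bar> \<le> C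
     \<and> \<bar>fib_diff E iota (ev x \<otimes>\<^bsub>E\<^esub> rho g) (rho (pr (ev x) \<otimes>\<^bsub>G\<^esub> g))\<bar> \<le> C"
proof -
  from ext have gG: "group G" and gE: "group E" and ih: "iota \<in> hom integer_group E"
    and ij: "inj iota" and ph: "pr \<in> hom E G"
    and cen: "\<forall>n. \<forall>e\<in>carrier E. iota n \<otimes>\<^bsub>E\<^esub> e = e \<otimes>\<^bsub>E\<^esub> iota n"
    unfolding central_extension_def by auto
  interpret C: cext E iota using gE ih ij cen by (simp add: cext_def cext_axioms_def)
  interpret G: group G by (rule gG)
  interpret P: group_hom E G pr using gE gG ph by (simp add: group_hom_def group_hom_axioms_def)
  define S where "S = (\<lambda>g. {eval_word E ev w \<otimes>\<^bsub>E\<^esub> iota (- C * int (length w)) | w. set w \<subseteq> Xgen \<and> pr (eval_word E ev w) = g})"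
  have rm: "\<And>g. g \<in> carrier G \<Longrightarrow> rho g \<in> S g \<and> (\<forall>h\<in>S g. fib_le E iota h (rho g))"
    using rho_max unfolding S_def by blast
  have Sin: "\<And>g w. set w \<subseteq> Xgen \<Longrightarrow> pr (eval_word E ev w) = g \<Longrightarrow>
      eval_word E ev w \<otimes>\<^bsub>E\<^esub> iota (- C * int (length w)) \<in> S g"
    unfolding S_def by blast
  have Sget: "\<And>g. g \<in> carrier G \<Longrightarrow> \<exists>w. rho g = eval_word E ev w \<otimes>\<^bsub>E\<^esub> iota (- C * int (length w))
     \<and> set w \<subseteq> Xgen \<and> pr (eval_word E ev w) = g"
    using rm unfolding S_def by blast
  have ex: "ev x \<in> carrier E" using evX x by auto
  obtain y where y: "y \<in> Xgen" and ey: "ev y = inv\<^bsub>E\<^esub> ev x" using symX x by force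
  have eyc: "ev y \<in> carrier E" using ey ex by simp
  have rc: "\<And>g. g \<in> carrier G \<Longrightarrow> rho g \<in> carrier E"
  proof -
    fix g assume "g \<in> carrier G"
    then obtain w where "rho g = eval_word E ev w \<otimes>\<^bsub>E\<^esub> iota (- C * int (length w))" "set w \<subseteq> Xgen"
      using Sget by blast
    then show "rho g \<in> carrier E" using eval_carr[OF gE evX] by simp
  qed
  have pxy: "pr (ev x) \<otimes>\<^bsub>G\<^esub> pr (ev y) = \<one>\<^bsub>G\<^esub>" "pr (ev y) \<otimes>\<^bsub>G\<^esub> pr (ev x) = \<one>\<^bsub>G\<^esub>"
    using ex ey by (simp_all add: P.hom_mult[symmetric])
  have prx: "pr (ev x) \<in> carrier G" "pr (ev y) \<in> carrier G" using ex ey by auto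
  have len: "\<And>w z. - C * int (length (w @ [z])) = - C * int (length w) + - C"
    "\<And>w z. - C * int (length (z # w)) = - C * int (length w) + - C"
    by (simp_all add: algebra_simps)
  define g1 where "g1 = g \<otimes>\<^bsub>G\<^esub> pr (ev x)"
  have g1: "g1 \<in> carrier G" using g prx unfolding g1_def by simp
  obtain w where w: "rho g = eval_word E ev w \<otimes>\<^bsub>E\<^esub> iota (- C * int (length w))" "set w \<subseteq> Xgen"
     "pr (eval_word E ev w) = g" using Sget[OF g] by blast
  obtain v where v: "rho g1 = eval_word E ev v \<otimes>\<^bsub>E\<^esub> iota (- C * int (length v))" "set v \<subseteq> Xgen"
     "pr (eval_word E ev v) = g1" using Sget[OF g1] by blast
  have wc: "eval_word E ev w \<in> carrier E" using eval_carr[OF gE evX w(2)] .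
  have vc: "eval_word E ev v \<in> carrier E" using eval_carr[OF gE evX v(2)] .
  have "eval_word E ev (w @ [x]) \<otimes>\<^bsub>E\<^esub> iota (- C * int (length (w @ [x]))) \<in> S g1"
    using w x ex wc by (intro Sin) (auto simp: eval_snoc[OF gE evX] g1_def)
  moreover have "eval_word E ev (w @ [x]) \<otimes>\<^bsub>E\<^esub> iota (- C * int (length (w @ [x])))
      = rho g \<otimes>\<^bsub>E\<^esub> ev x \<otimes>\<^bsub>E\<^esub> iota (-C)"
    using w x ex wc by (simp only: eval_snoc[OF gE evX] len C.shuffle)
  ultimately obtain n1 where n1: "n1 \<ge> 0" "rho g1 \<otimes>\<^bsub>E\<^esub> inv\<^bsub>E\<^esub> (rho g \<otimes>\<^bsub>E\<^esub> ev x \<otimes>\<^bsub>E\<^esub> iota (-C)) = iota n1"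
    using rm[OF g1] unfolding fib_le_def by auto
  have "eval_word E ev (v @ [y]) \<otimes>\<^bsub>E\<^esub> iota (- C * int (length (v @ [y]))) \<in> S g"
    using v y ex eyc vc g prx pxy by (intro Sin) (auto simp: eval_snoc[OF gE evX] g1_def G.m_assoc P.hom_mult)
  moreover have "eval_word E ev (v @ [y]) \<otimes>\<^bsub>E\<^esub> iota (- C * int (length (v @ [y])))
      = rho g1 \<otimes>\<^bsub>E\<^esub> inv\<^bsub>E\<^esub> ev x \<otimes>\<^bsub>E\<^esub> iota (-C)"
    using v y ex vc ey by (simp only: eval_snoc[OF gE evX] len C.shuffle C.inv_closed)
  ultimately obtain n2 where n2: "n2 \<ge> 0" "rho g \<otimes>\<^bsub>E\<^esub> inv\<^bsub>E\<^esub> (rho g1 \<otimes>\<^bsub>E\<^esub> inv\<^bsub>E\<^esub> ev x \<otimes>\<^bsub>E\<^esub> iota (-C)) = iota n2"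
    using rm[OF g] unfolding fib_le_def by auto
  have A: "\<bar>fib_diff E iota (rho g \<otimes>\<^bsub>E\<^esub> ev x) (rho g1)\<bar> \<le> C"
    unfolding fib_diff_def using C.part1[OF rc[OF g] rc[OF g1] ex n1(2) n1(1) n2(2) n2(1)] .
  define g2 where "g2 = pr (ev x) \<otimes>\<^bsub>G\<^esub> g"
  have g2: "g2 \<in> carrier G" using g prx unfolding g2_def by simp
  obtain u where u: "rho g2 = eval_word E ev u \<otimes>\<^bsub>E\<^esub> iota (- C * int (length u))" "set u \<subseteq> Xgen"
     "pr (eval_word E ev u) = g2" using Sget[OF g2] by blast
  have uc: "eval_word E ev u \<in> carrier E" using eval_carr[OF gE evX u(2)] .
  have "eval_word E ev (x # w) \<otimes>\<^bsub>E\<^esub> iota (- C * int (length (x # w))) \<in> S g2"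
    using w x ex wc by (intro Sin) (auto simp: eval_cons g2_def)
  moreover have "eval_word E ev (x # w) \<otimes>\<^bsub>E\<^esub> iota (- C * int (length (x # w)))
      = ev x \<otimes>\<^bsub>E\<^esub> rho g \<otimes>\<^bsub>E\<^esub> iota (-C)"
    using w x ex wc by (simp only: eval_cons len C.shuffle2)
  ultimately obtain m1 where m1: "m1 \<ge> 0" "rho g2 \<otimes>\<^bsub>E\<^esub> inv\<^bsub>E\<^esub> (ev x \<otimes>\<^bsub>E\<^esub> rho g \<otimes>\<^bsub>E\<^esub> iota (-C)) = iota m1"
    using rm[OF g2] unfolding fib_le_def by auto
  have "eval_word E ev (y # u) \<otimes>\<^bsub>E\<^esub> iota (- C * int (length (y # u))) \<in> S g"
    using u y ex eyc uc g prx pxy by (intro Sin) (auto simp: eval_cons g2_def G.m_assoc[symmetric] P.hom_mult)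
  moreover have "eval_word E ev (y # u) \<otimes>\<^bsub>E\<^esub> iota (- C * int (length (y # u)))
      = inv\<^bsub>E\<^esub> ev x \<otimes>\<^bsub>E\<^esub> rho g2 \<otimes>\<^bsub>E\<^esub> iota (-C)"
    using u y ex uc ey by (simp only: eval_cons len C.shuffle2 C.inv_closed)
  ultimately obtain m2 where m2: "m2 \<ge> 0" "rho g \<otimes>\<^bsub>E\<^esub> inv\<^bsub>E\<^esub> (inv\<^bsub>E\<^esub> ev x \<otimes>\<^bsub>E\<^esub> rho g2 \<otimes>\<^bsub>E\<^esub> iota (-C)) = iota m2"
    using rm[OF g] unfolding fib_le_def by auto
  have B: "\<bar>fib_diff E iota (ev x \<otimes>\<^bsub>E\<^esub> rho g) (rho g2)\<bar> \<le> C"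
    unfolding fib_diff_def using C.part2[OF rc[OF g] rc[OF g2] ex m1(2) m1(1) m2(2) m2(1)] .
  show ?thesis using A B unfolding g1_def g2_def by simp
qed

end
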